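(* Let $\nu\ge0$ and define, for $x>0$, $$\Gamma_{\nu+1}(x)=\frac{x}{\sqrt{x^2+\left(\nu+\frac52\right)^2}+\nu+\frac32}.$$ Let $x_\nu$ be the unique positive root of the equation $$\Gamma_{\nu+1}^{2\nu+1}(x)\left(\frac{2(\nu+1)}{x}+\Gamma_{\nu+1}(x)\right)^{2\nu+3}=1.$$ Then for all $x\in(0,x_\nu)$, $$I_{\nu+1}^{4\nu+4}(x)<I_{\nu+2}^{2\nu+1}(x)\,I_\nu^{2\nu+3}(x).$$
   Context: $I_\nu$ denotes the modified Bessel function of the first kind of order $\nu$. *)

theory Defs
  imports "HOL-Analysis.Analysis"
begin

definition besselI :: "real \<Rightarrow> real \<Rightarrow> real" where
  "besselI nu x = (\<Sum>k. (x / 2) powr (2 * real k + nu) / (fact k * Gamma (real k + nu + 1)))"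

text \<open>GammaB nu x is the paper's Gamma_{nu+1}(x).\<close>
definition GammaB :: "real \<Rightarrow> real \<Rightarrow> real" where
  "GammaB nu x = x / (sqrt (x\<^sup>2 + (nu + 5/2)\<^sup>2) + nu + 3/2)"

definition root_eq :: "real \<Rightarrow> real \<Rightarrow> bool" where
  "root_eq nu x \<longleftrightarrow>
     (GammaB nu x) powr (2 * nu + 1) * (2 * (nu + 1) / x + GammaB nu x) powr (2 * nu + 3) = 1"

end

theory Submission
  imports Defs
begin

definition ca :: "real \<Rightarrow> nat \<Rightarrow> real" where
  "ca mu k = 1 / (fact k * Gamma (real k + mu + 1))"

definition SS :: "real \<Rightarrow> real \<Rightarrow> real" where
  "SS mu y = (\<Sum>k. ca mu k * y ^ k)"

lemma poch_ge1: "(z::real) \<ge> 1 \<Longrightarrow> pochhammer z k \<ge> 1"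
proof (induction k)
  case 0 then show ?case by simp
next
  case (Suc k)
  have "pochhammer z (Suc k) = pochhammer z k * (z + of_nat k)" by (rule pochhammer_Suc)
  moreover have zk: "z + of_nat k \<ge> 1" using Suc.prems by simp
  moreover have "1 \<le> pochhammer z k" using Suc by simp
  ultimately have "1 * 1 \<le> pochhammer z k * (z + of_nat k)" by (intro mult_mono) auto
  then show ?case by (simp add: pochhammer_Suc)
qed

lemma Gamma_ge: assumes "mu \<ge> 0" shows "Gamma (mu + 1) \<le> Gamma (real k + mu + 1)"
proof -
  have nz: "mu + 1 \<notin> \<int>\<^sub>\<le>\<^sub>0"
  proof
    assume "mu + 1 \<in> \<int>\<^sub>\<le>\<^sub>0"
    then have "mu + 1 \<le> 0" by (rule nonpos_Ints_nonpos)
    with assms show False by simp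
  qed
  have p: "pochhammer (mu+1) k = Gamma (mu + 1 + of_nat k) / Gamma (mu+1)"
    by (rule pochhammer_Gamma[OF nz])
  have g: "Gamma (mu+1) > 0" using assms by simp
  have "pochhammer (mu+1) k \<ge> 1" using assms by (intro poch_ge1) simp
  with p g have h: "Gamma (mu + 1 + of_nat k) \<ge> Gamma (mu+1)" by (simp add: field_simps)
  have eq: "mu + 1 + of_nat k = real k + mu + 1" by simp
  show ?thesis using h unfolding eq .
qed

lemma ca_pos: "mu \<ge> 0 \<Longrightarrow> ca mu k > 0"
  unfolding ca_def by (intro divide_pos_pos) (auto intro!: mult_pos_pos Gamma_real_pos)

lemma ca_summable: assumes "mu \<ge> 0" shows "summable (\<lambda>k. ca mu k * y ^ k)"
proof (rule summable_comparison_test')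
  show "summable (\<lambda>k. inverse (fact k) * \<bar>y\<bar> ^ k / Gamma (mu+1))"
    using summable_exp[of "\<bar>y\<bar>"] by (intro summable_divide)
  fix k :: nat
  have g: "Gamma (mu+1) > 0" using assms by simp
  have g2: "Gamma (real k + mu + 1) \<ge> Gamma (mu+1)" using Gamma_ge assms by blast
  have "norm (ca mu k * y ^ k) = \<bar>y\<bar>^k / (fact k * Gamma (real k + mu + 1))"
    using ca_pos[OF assms, of k] Gamma_real_pos[of "real k + mu + 1"] assms by (simp add: ca_def abs_mult power_abs)
  also have "\<dots> \<le> \<bar>y\<bar>^k / (fact k * Gamma (mu + 1))"
    using g g2 by (intro divide_left_mono mult_left_mono) auto
  also have "\<dots> = inverse (fact k) * \<bar>y\<bar> ^ k / Gamma (mu+1)" by (simp add: field_simps)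
  finally show "norm (ca mu k * y ^ k) \<le> inverse (fact k) * \<bar>y\<bar> ^ k / Gamma (mu+1)" .
qed

lemma Gamma_shift: "mu \<ge> 0 \<Longrightarrow> Gamma (real k + mu + 2) = (real k + mu + 1) * Gamma (real k + mu + 1)"
proof -
  assume "mu \<ge> 0"
  then have nz: "real k + mu + 1 \<notin> \<int>\<^sub>\<le>\<^sub>0"
  proof -
    assume m: "mu \<ge> 0"
    show ?thesis
    proof
      assume "real k + mu + 1 \<in> \<int>\<^sub>\<le>\<^sub>0"
      then have "real k + mu + 1 \<le> 0" by (rule nonpos_Ints_nonpos)
      with m show False by simp
    qed
  qed
  have eq: "real k + mu + 1 + 1 = real k + mu + 2" by simp
  from Gamma_plus1[OF nz] show ?thesis unfolding eq .
qed

lemma diffs_ca: "mu \<ge> 0 \<Longrightarrow> diffs (ca mu) = ca (mu + 1)"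
proof
  fix n assume mu: "mu \<ge> 0"
  define G where "G = Gamma (real (Suc n) + mu + 1)"
  have e: "real n + (mu + 1) + 1 = real (Suc n) + mu + 1" by simp
  have gp: "G > 0" unfolding G_def using mu by (intro Gamma_real_pos) simp
  have fp: "(fact n :: real) > 0" by simp
  have a: "diffs (ca mu) n = real (Suc n) * (1 / (fact (Suc n) * G))" by (simp only: diffs_def ca_def G_def)
  have b: "ca (mu + 1) n = 1 / (fact n * G)" by (simp only: ca_def e G_def)
  have c: "real (Suc n) * (1 / (fact (Suc n) * G)) = 1 / (fact n * G)"
    using gp fp by (simp add: fact_Suc field_simps del: of_nat_Suc)
  show "diffs (ca mu) n = ca (mu + 1) n" unfolding a b by (rule c)
qed

lemma SS_deriv: "mu \<ge> 0 \<Longrightarrow> DERIV (SS mu) y :> SS (mu + 1) y"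
proof -
  assume mu: "mu \<ge> 0"
  have "((\<lambda>x. \<Sum>n. ca mu n * x^n) has_field_derivative (\<Sum>n. diffs (ca mu) n * y^n)) (at y)"
    by (rule termdiffs_strong_converges_everywhere) (rule ca_summable[OF mu])
  then show ?thesis by (simp only: SS_def[abs_def] diffs_ca[OF mu])
qed

lemma SS_pos: "mu \<ge> 0 \<Longrightarrow> y \<ge> 0 \<Longrightarrow> SS mu y > 0"
  unfolding SS_def
proof (rule suminf_pos2[where i=0])
  assume a: "mu \<ge> 0" "y \<ge> 0"
  show "summable (\<lambda>k. ca mu k * y ^ k)" by (rule ca_summable[OF a(1)])
  show "0 \<le> ca mu n * y ^ n" for n using ca_pos[OF a(1), of n] a by simp
  show "0 < ca mu 0 * y ^ 0" using ca_pos[OF a(1), of 0] by simp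
qed

lemma ca_rec: assumes mu: "mu \<ge> 0" shows "ca mu k = (real k + mu + 1) * ca (mu+1) k"
proof -
  have e: "real k + (mu + 1) + 1 = real k + mu + 2" by simp
  have g: "Gamma (real k + mu + 1) > 0" using mu by (intro Gamma_real_pos) simp
  have p: "real k + mu + 1 > 0" using mu by simp
  have "ca (mu+1) k = 1 / (fact k * ((real k + mu + 1) * Gamma (real k + mu + 1)))"
    unfolding ca_def e Gamma_shift[OF mu] ..
  moreover have "\<And>P f G. P \<noteq> 0 \<Longrightarrow> P * (1/(f*(P*G))) = 1/(f*(G::real))" by (simp add: field_simps)
  ultimately show ?thesis unfolding ca_def using p by simp
qed

lemma SS_rec: assumes mu: "mu \<ge> 0"
  shows "SS mu y = y * SS (mu+2) y + (mu+1) * SS (mu+1) y"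
proof -
  define f where "f k = real k * ca (mu+1) k * y^k" for k
  have mu1: "mu + 1 \<ge> 0" using mu by simp
  have e2: "mu + 1 + 1 = mu + 2" by simp
  have fs: "f (Suc j) = y * (ca (mu+2) j * y^j)" for j
  proof -
    have "diffs (ca (mu+1)) j = ca (mu+2) j" using diffs_ca[OF mu1] unfolding e2 by simp
    then have "real (Suc j) * ca (mu+1) (Suc j) = ca (mu+2) j" unfolding diffs_def by simp
    then show ?thesis unfolding f_def by (simp add: algebra_simps del: of_nat_Suc)
  qed
  have s2: "summable (\<lambda>j. ca (mu+2) j * y^j)" using mu by (intro ca_summable) simp
  have sfs: "summable (\<lambda>j. f (Suc j))" unfolding fs using s2 by (rule summable_mult)
  then have sf: "summable f" by (simp add: summable_Suc_iff)
  have "suminf (\<lambda>j. f (Suc j)) = suminf f - f 0" by (rule suminf_split_head[OF sf])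
  then have sumf: "suminf f = y * SS (mu+2) y"
    unfolding fs SS_def using suminf_mult[OF s2, of y] by (simp add: f_def)
  have s1: "summable (\<lambda>k. ca (mu+1) k * y^k)" using mu1 by (rule ca_summable)
  have "SS mu y = (\<Sum>k. (mu+1) * (ca (mu+1) k * y^k) + f k)"
    unfolding SS_def f_def by (rule suminf_cong) (simp add: ca_rec[OF mu] algebra_simps)
  also have "\<dots> = (\<Sum>k. (mu+1) * (ca (mu+1) k * y^k)) + suminf f"
    by (rule suminf_add[symmetric]) (use s1 sf in \<open>auto intro: summable_mult\<close>)
  also have "\<dots> = (mu+1) * SS (mu+1) y + y * SS (mu+2) y"
    unfolding sumf SS_def using suminf_mult[OF s1, of "mu+1"] by simp
  finally show ?thesis by simp
qed

lemma besselI_SS: assumes x: "x > 0" and mu: "mu \<ge> 0"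
  shows "besselI mu x = (x/2) powr mu * SS mu (x\<^sup>2/4)"
proof -
  have t: "(x / 2) powr (2 * real k + mu) / (fact k * Gamma (real k + mu + 1))
        = (x/2) powr mu * (ca mu k * (x\<^sup>2/4)^k)" for k
  proof -
    have "(x / 2) powr (2 * real k + mu) = (x/2) powr (real (2*k)) * (x/2) powr mu"
      by (simp add: powr_add)
    also have "(x/2) powr (real (2*k)) = (x/2)^(2*k)" by (rule powr_realpow) (use x in simp)
    also have "(x/2)^(2*k) = (x\<^sup>2/4)^k" by (simp add: power_mult power_divide)
    finally show ?thesis unfolding ca_def by simp
  qed
  show ?thesis unfolding besselI_def t SS_def
    by (rule suminf_mult) (rule ca_summable[OF mu])
qed

definition RR :: "real \<Rightarrow> real \<Rightarrow> real" where
  "RR nu z = (z/2) * SS (nu+2) (z\<^sup>2/4) / SS (nu+1) (z\<^sup>2/4)"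

lemma SSsq_deriv: assumes "m \<ge> 0"
  shows "DERIV (\<lambda>z. SS m (z\<^sup>2/4)) z :> SS (m+1) (z\<^sup>2/4) * (z/2)"
proof -
  have d: "DERIV (\<lambda>z. z\<^sup>2/4) z :> z/2" by (auto intro!: derivative_eq_intros)
  show ?thesis by (rule DERIV_chain2[OF SS_deriv[OF assms] d])
qed

lemma RR_deriv: assumes nu: "nu \<ge> 0" and z: "z > 0"
  shows "DERIV (RR nu) z :> 1 - (2*nu+3) * RR nu z / z - (RR nu z)\<^sup>2"
proof -
  define y where "y = z\<^sup>2/4"
  define A where "A = SS (nu+1) y"
  define B where "B = SS (nu+2) y"
  define C where "C = SS (nu+3) y"
  have Ap: "A > 0" unfolding A_def y_def using nu by (intro SS_pos) auto
  have yp: "y > 0" unfolding y_def using z by simp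
  have rec: "A = y * C + (nu+2) * B"
  proof -
    have "SS (nu+1) y = y * SS (nu+1+2) y + (nu+1+1) * SS (nu+1+1) y" using nu by (intro SS_rec) simp
    moreover have "nu+1+2 = nu+3" "nu+1+1 = nu+2" by simp_all
    ultimately show ?thesis unfolding A_def B_def C_def by simp
  qed
  have dA: "DERIV (\<lambda>z. SS (nu+1) (z\<^sup>2/4)) z :> B * (z/2)"
    using SSsq_deriv[of "nu+1" z] nu unfolding B_def y_def by (simp add: add_ac)
  have dB: "DERIV (\<lambda>z. SS (nu+2) (z\<^sup>2/4)) z :> C * (z/2)"
    using SSsq_deriv[of "nu+2" z] nu unfolding C_def y_def by (simp add: add_ac)
  have dN: "DERIV (\<lambda>z. (z/2) * SS (nu+2) (z\<^sup>2/4)) z :> 1/2 * B + (z/2) * (C * (z/2))"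
    using DERIV_mult[OF DERIV_cdivide[OF DERIV_ident, of 2] dB] unfolding B_def y_def by (simp add: mult_ac)
  have dR: "DERIV (RR nu) z :> ((1/2 * B + (z/2) * (C * (z/2))) * A - (z/2) * B * (B * (z/2))) / A\<^sup>2"
    unfolding RR_def[abs_def]
    using DERIV_divide[OF dN dA] Ap unfolding A_def B_def y_def by (simp add: power2_eq_square)
  have R: "RR nu z = (z/2) * B / A" unfolding RR_def A_def B_def y_def by simp
  have C: "C = (A - (nu+2) * B) / y" using rec yp by (simp add: field_simps)
  have "((1/2 * B + (z/2) * (C * (z/2))) * A - (z/2) * B * (B * (z/2))) / A\<^sup>2
      = 1 - (2*nu+3) * RR nu z / z - (RR nu z)\<^sup>2"
    unfolding R C y_def using Ap z by (simp add: field_simps power2_eq_square)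
  with dR show ?thesis by simp
qed

lemma F_pos:
  fixes S a b z :: real
  assumes "S > a" "a = b + 1" "b > 0" "z\<^sup>2 = S\<^sup>2 - a\<^sup>2" "z > 0"
  shows "((S+b) - z*(z/S))/(S+b)\<^sup>2 < 1 - (2*b)*(z/(S+b))/z - (z/(S+b))\<^sup>2"
proof -
  have Sp: "S > 0" using assms by simp
  have Sb: "S + b > 0" using assms by simp
  have r: "1 - (2*b)*(z/(S+b))/z - (z/(S+b))\<^sup>2 = (a + b) / (S+b)\<^sup>2"
  proof -
    have r1: "(2*b)*(z/(S+b))/z = 2*b/(S+b)" using assms by simp
    have r2: "(z/(S+b))\<^sup>2 = z\<^sup>2/(S+b)\<^sup>2" by (simp add: power_divide)
    have gen: "\<And>T::real. T \<noteq> 0 \<Longrightarrow> 1 - 2*b/T - z\<^sup>2/T\<^sup>2 = (T\<^sup>2 - 2*b*T - z\<^sup>2)/T\<^sup>2"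
      by (simp add: field_simps power2_eq_square)
    have r3: "1 - 2*b/(S+b) - z\<^sup>2/(S+b)\<^sup>2 = ((S+b)\<^sup>2 - 2*b*(S+b) - z\<^sup>2)/(S+b)\<^sup>2"
      using Sb by (intro gen) simp
    have r4: "(S+b)\<^sup>2 - 2*b*(S+b) - z\<^sup>2 = a + b" using assms(2,4) by (simp add: algebra_simps power2_eq_square)
    show ?thesis unfolding r1 r2 r3 r4 ..
  qed
  have l: "((S+b) - z*(z/S))/(S+b)\<^sup>2 = (a\<^sup>2 + b*S) / (S * (S+b)\<^sup>2)"
  proof -
    have "(S+b) - z*(z/S) = (S*(S+b) - z\<^sup>2)/S" using Sp by (simp add: field_simps power2_eq_square)
    also have "S*(S+b) - z\<^sup>2 = a\<^sup>2 + b*S" using assms(4) by (simp add: algebra_simps power2_eq_square)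
    finally show ?thesis by simp
  qed
  have ap: "a > 0" using assms by simp
  have aa: "a * a < a * S" using mult_strict_left_mono[OF assms(1) ap] .
  have e1: "S * (a+b) = a * S + b * S" by (simp add: algebra_simps)
  have "a\<^sup>2 + b*S < S * (a+b)" unfolding e1 power2_eq_square using aa by linarith
  then have "(a\<^sup>2 + b*S) / S < a + b" using Sp by (simp add: divide_less_eq mult.commute)
  then have "(a\<^sup>2 + b*S) / S / (S+b)\<^sup>2 < (a + b) / (S+b)\<^sup>2" using Sb
    by (intro divide_strict_right_mono) auto
  then show ?thesis unfolding l r by (simp add: mult.commute)
qed

lemma GB_deriv: assumes z: "z > 0" and nu: "nu \<ge> 0"
  shows "DERIV (GammaB nu) z :>
    ((sqrt (z\<^sup>2 + (nu+5/2)\<^sup>2) + (nu+3/2)) - z * (z / sqrt (z\<^sup>2 + (nu+5/2)\<^sup>2)))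
      / (sqrt (z\<^sup>2 + (nu+5/2)\<^sup>2) + (nu+3/2))\<^sup>2"
proof -
  define a where "a = nu + 5/2"
  have pos: "z\<^sup>2 + a\<^sup>2 > 0" using z by (simp add: add_pos_nonneg)
  have dS: "DERIV (\<lambda>z. sqrt (z\<^sup>2 + a\<^sup>2)) z :> z / sqrt (z\<^sup>2 + a\<^sup>2)"
    using pos by (auto intro!: derivative_eq_intros simp: field_simps)
  have dD: "DERIV (\<lambda>z. sqrt (z\<^sup>2 + a\<^sup>2) + (nu+3/2)) z :> z / sqrt (z\<^sup>2 + a\<^sup>2)"
    using DERIV_add[OF dS DERIV_const[of "nu+3/2"]] by simp
  have nz: "sqrt (z\<^sup>2 + a\<^sup>2) + (nu+3/2) \<noteq> 0"
  proof -
    have "sqrt (z\<^sup>2 + a\<^sup>2) \<ge> 0" by simp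
    then show ?thesis using nu by linarith
  qed
  have "DERIV (\<lambda>z. z / (sqrt (z\<^sup>2 + a\<^sup>2) + (nu+3/2))) z :>
     (1 * (sqrt (z\<^sup>2 + a\<^sup>2) + (nu+3/2)) - z * (z / sqrt (z\<^sup>2 + a\<^sup>2))) / (sqrt (z\<^sup>2 + a\<^sup>2) + (nu+3/2))\<^sup>2"
    using DERIV_divide[OF DERIV_ident dD nz] by (simp add: power2_eq_square)
  moreover have "GammaB nu = (\<lambda>z. z / (sqrt (z\<^sup>2 + a\<^sup>2) + (nu+3/2)))"
    unfolding GammaB_def[abs_def] a_def by (simp add: add.assoc)
  ultimately show ?thesis unfolding a_def by simp
qed

lemma RR_pos: "nu \<ge> 0 \<Longrightarrow> z > 0 \<Longrightarrow> RR nu z > 0"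
  unfolding RR_def by (intro divide_pos_pos mult_pos_pos SS_pos) auto

lemma GB_pos: "nu \<ge> 0 \<Longrightarrow> z > 0 \<Longrightarrow> GammaB nu z > 0"
  unfolding GammaB_def by (intro divide_pos_pos add_nonneg_pos add_nonneg_nonneg) auto

lemma GB_le: "nu \<ge> 0 \<Longrightarrow> z > 0 \<Longrightarrow> GammaB nu z \<le> z"
proof -
  assume nu: "nu \<ge> 0" and z: "z > 0"
  have "sqrt (z\<^sup>2 + (nu + 5/2)\<^sup>2) \<ge> 0" by simp
  then have "sqrt (z\<^sup>2 + (nu + 5/2)\<^sup>2) + nu + 3/2 \<ge> 1" using nu by linarith
  then show ?thesis unfolding GammaB_def using z by (simp add: divide_le_eq)
qed

lemma D_deriv_pos: assumes nu: "nu \<ge> 0" and z: "z > 0" and le: "RR nu z \<le> GammaB nu z"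
  shows "\<exists>d. DERIV (\<lambda>z. RR nu z - GammaB nu z) z :> d \<and> d > 0"
proof -
  define a where "a = nu + 5/2"
  define b where "b = nu + 3/2"
  define S where "S = sqrt (z\<^sup>2 + a\<^sup>2)"
  have aS: "S > a" unfolding S_def a_def using z nu by (intro real_less_rsqrt) (simp add: add_pos_nonneg)
  have Ssq: "z\<^sup>2 = S\<^sup>2 - a\<^sup>2" unfolding S_def by (simp add: add_pos_nonneg)
  have G: "GammaB nu z = z / (S + b)" unfolding GammaB_def S_def a_def b_def by (simp add: add.assoc)
  have Fp: "((S+b) - z*(z/S))/(S+b)\<^sup>2 < 1 - (2*b)*(z/(S+b))/z - (z/(S+b))\<^sup>2"
    by (rule F_pos[OF aS _ _ Ssq z]) (use nu in \<open>simp_all add: a_def b_def\<close>)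
  have dG: "DERIV (GammaB nu) z :> ((S+b) - z*(z/S))/(S+b)\<^sup>2"
    using GB_deriv[OF z nu] unfolding S_def a_def b_def .
  have dR: "DERIV (RR nu) z :> 1 - (2*nu+3) * RR nu z / z - (RR nu z)\<^sup>2" by (rule RR_deriv[OF nu z])
  have Rp: "RR nu z > 0" using RR_pos nu z by blast
  have i1: "(2*nu+3) * RR nu z / z \<le> (2*nu+3) * GammaB nu z / z"
    using le nu z by (intro divide_right_mono mult_left_mono) auto
  have i2: "(RR nu z)\<^sup>2 \<le> (GammaB nu z)\<^sup>2" using le Rp by (intro power_mono) auto
  have eb: "2*b = 2*nu+3" unfolding b_def by simp
  have "((S+b) - z*(z/S))/(S+b)\<^sup>2 < 1 - (2*nu+3) * RR nu z / z - (RR nu z)\<^sup>2"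
    using Fp i1 i2 unfolding G eb by linarith
  then show ?thesis using DERIV_diff[OF dR dG] by (intro exI[of _ "1 - (2*nu+3) * RR nu z / z - (RR nu z)\<^sup>2 - ((S+b) - z*(z/S))/(S+b)\<^sup>2"]) auto
qed

lemma D_left: assumes nu: "nu \<ge> 0" and e: "0 < e" "e < z"
  and Dz: "RR nu z - GammaB nu z \<le> 0"
  shows "RR nu e - GammaB nu e < RR nu z - GammaB nu z"
proof -
  define D where "D w = RR nu w - GammaB nu w" for w
  have step: "\<exists>t. e < t \<and> t < q \<and> D t < D q" if q: "e < q" "q \<le> z" "D q \<le> D z" for q
  proof -
    have "RR nu q \<le> GammaB nu q" using q Dz unfolding D_def by simp
    moreover have qp: "q > 0" using q e by simp
    ultimately obtain d where dd0: "DERIV (\<lambda>z. RR nu z - GammaB nu z) q :> d" "d > 0"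
      using D_deriv_pos[OF nu qp] by blast
    have Dl: "D = (\<lambda>z. RR nu z - GammaB nu z)" unfolding D_def ..
    have dd: "DERIV D q :> d" "d > 0" using dd0 unfolding Dl by auto
    from DERIV_pos_inc_left[OF dd] obtain r where r: "r > 0" "\<forall>h>0. h < r \<longrightarrow> D (q - h) < D q" by blast
    define h where "h = min (r/2) ((q-e)/2)"
    have hp: "h > 0" "h < r" using r q unfolding h_def by auto
    have "h \<le> (q-e)/2" unfolding h_def by (rule min.cobounded2)
    have "D (q - h) < D q" using r(2) hp by blast
    moreover have "e < q - h"
    proof -
      have "2 * h \<le> q - e" using \<open>h \<le> (q-e)/2\<close> by simp
      then show ?thesis using \<open>h > 0\<close> by linarith
    qed
    moreover have "q - h < q" using \<open>h > 0\<close> by linarith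
    ultimately show ?thesis by (intro exI[of _ "q - h"]) simp
  qed
  have cont: "continuous_on {e..z} D"
  proof (rule continuous_at_imp_continuous_on, rule ballI)
    fix w assume "w \<in> {e..z}"
    then have w: "w > 0" using e by auto
    have "DERIV (RR nu) w :> 1 - (2*nu+3) * RR nu w / w - (RR nu w)\<^sup>2" by (rule RR_deriv[OF nu w])
    moreover obtain g where "DERIV (GammaB nu) w :> g" using GB_deriv[OF w nu] by blast
    ultimately have "DERIV D w :> (1 - (2*nu+3) * RR nu w / w - (RR nu w)\<^sup>2) - g"
      unfolding D_def[abs_def] by (rule DERIV_diff)
    then show "isCont D w" by (rule DERIV_isCont)
  qed
  have ne: "{e..z} \<noteq> {}" using e by simp
  have zin: "z \<in> {e..z}" "e \<in> {e..z}" using e by auto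
  obtain p where p: "p \<in> {e..z}" "\<forall>w\<in>{e..z}. D p \<le> D w"
    using continuous_attains_inf[OF compact_Icc ne cont] by blast
  have "p = e"
  proof (rule ccontr)
    assume "p \<noteq> e"
    then have ep: "e < p" "p \<le> z" using p(1) by auto
    have "D p \<le> D z" using p(2) zin(1) by blast
    then obtain t where t: "e < t" "t < p" "D t < D p" using step[OF ep] by blast
    then have "t \<in> {e..z}" using ep by auto
    then have "D p \<le> D t" using p(2) by blast
    with t show False by linarith
  qed
  then have "D e \<le> D z" using p(2) zin(1) by blast
  moreover have "D e \<noteq> D z"
  proof
    assume eq: "D e = D z"
    obtain t where t: "e < t" "t < z" "D t < D z" using step[of z] e by auto
    then have "t \<in> {e..z}" by simp
    then have "D p \<le> D t" using p(2) by blast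
    then have "D e \<le> D t" using \<open>p = e\<close> by simp
    with t eq show False by linarith
  qed
  ultimately show ?thesis unfolding D_def by simp
qed

lemma amos: assumes nu: "nu \<ge> 0" and z: "z > 0" shows "GammaB nu z \<le> RR nu z"
proof (rule ccontr)
  assume "\<not> ?thesis"
  then have Dz: "RR nu z - GammaB nu z \<le> 0" by simp
  define z2 where "z2 = z/2"
  have z2: "0 < z2" "z2 < z" unfolding z2_def using z by auto
  have D2: "RR nu z2 - GammaB nu z2 < RR nu z - GammaB nu z" by (rule D_left[OF nu z2 Dz])
  then have D2n: "RR nu z2 - GammaB nu z2 < 0" using Dz by simp
  define e where "e = min (z2/2) (- (RR nu z2 - GammaB nu z2) / 2)"
  have e: "0 < e" "e < z2" using z2 D2n unfolding e_def by auto
  have De: "RR nu e - GammaB nu e < RR nu z2 - GammaB nu z2" by (rule D_left[OF nu e]) (use D2n in simp)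
  have "RR nu e > 0" using RR_pos[OF nu e(1)] .
  moreover have "GammaB nu e \<le> e" using GB_le[OF nu e(1)] .
  moreover have "e \<le> - (RR nu z2 - GammaB nu z2) / 2" unfolding e_def by (rule min.cobounded2)
  ultimately have h1: "RR nu e - GammaB nu e \<ge> (RR nu z2 - GammaB nu z2) / 2" by linarith
  define d1 where "d1 = RR nu e - GammaB nu e"
  define d2 where "d2 = RR nu z2 - GammaB nu z2"
  have "d2 / 2 \<le> d1" "d1 < d2" "d2 < 0" using h1 De D2n unfolding d1_def d2_def by auto
  then show False by linarith
qed

definition ff :: "real \<Rightarrow> real \<Rightarrow> real" where
  "ff nu x = (GammaB nu x) powr (2 * nu + 1) * (2 * (nu + 1) / x + GammaB nu x) powr (2 * nu + 3)"

lemma ff_cont: assumes nu: "nu \<ge> 0" and p: "p > 0" shows "continuous_on {p..q} (ff nu)"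
proof -
  have cG: "continuous_on {p..q} (GammaB nu)"
  proof (rule continuous_at_imp_continuous_on, rule ballI)
    fix w assume "w \<in> {p..q}"
    then have w: "w > 0" using p by auto
    obtain g where "DERIV (GammaB nu) w :> g" using GB_deriv[OF w nu] by blast
    then show "isCont (GammaB nu) w" by (rule DERIV_isCont)
  qed
  have Gp: "\<forall>w\<in>{p..q}. GammaB nu w \<noteq> 0"
  proof
    fix w assume "w \<in> {p..q}"
    then have w: "w > 0" using p by auto
    show "GammaB nu w \<noteq> 0" using GB_pos[OF nu w] by simp
  qed
  have Gp2: "\<forall>w\<in>{p..q}. 2 * (nu + 1) / w + GammaB nu w \<noteq> 0"
  proof
    fix w assume "w \<in> {p..q}"
    then have w: "w > 0" using p by auto
    then have "2 * (nu + 1) / w > 0" using nu by simp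
    moreover have "GammaB nu w > 0" using GB_pos[OF nu w] .
    ultimately show "2 * (nu + 1) / w + GammaB nu w \<noteq> 0" by simp
  qed
  have cc: "continuous_on {p..q} (\<lambda>w. 2 * (nu + 1) / w)"
    using p by (intro continuous_intros) auto
  show ?thesis unfolding ff_def[abs_def]
    by (intro continuous_on_mult continuous_on_powr cG Gp Gp2 continuous_on_add cc continuous_on_const)
qed

lemma ff_small: assumes nu: "nu \<ge> 0" and x: "0 < x" "x \<le> 1"
  and xK: "x\<^sup>2 \<le> ((2*nu+2)/(2*nu+5)) powr (2*nu+1)"
  shows "ff nu x > 1"
proof -
  define K where "K = ((2*nu+2)/(2*nu+5)) powr (2*nu+1)"
  define c where "c = 2 * (nu + 1) / x"
  define G where "G = GammaB nu x"
  have Kp: "K > 0" unfolding K_def using nu by simp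
  have cp: "c > 0" unfolding c_def using nu x by simp
  have Gp: "G > 0" unfolding G_def using GB_pos[OF nu x(1)] .
  have Glow: "x / (2*nu+5) \<le> G"
  proof -
    have "sqrt (x\<^sup>2 + (nu+5/2)\<^sup>2) \<le> x + (nu + 5/2)"
      using x nu by (intro real_le_lsqrt) (auto simp: power2_eq_square algebra_simps)
    then have "sqrt (x\<^sup>2 + (nu+5/2)\<^sup>2) + nu + 3/2 \<le> 2*nu+5" using x by linarith
    moreover have "sqrt (x\<^sup>2 + (nu+5/2)\<^sup>2) + nu + 3/2 > 0"
      using nu by (simp add: add_nonneg_pos)
    ultimately show ?thesis unfolding G_def GammaB_def using x
      by (intro divide_left_mono) auto
  qed
  have "ff nu x = G powr (2*nu+1) * (c + G) powr (2*nu+3)" unfolding ff_def G_def c_def ..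
  also have "\<dots> \<ge> (x / (2*nu+5)) powr (2*nu+1) * c powr (2*nu+3)"
    using Glow Gp cp nu x by (intro mult_mono powr_mono2) auto
  finally have f1: "ff nu x \<ge> (x / (2*nu+5)) powr (2*nu+1) * c powr (2*nu+3)" .
  have e3: "(2*nu+1) + 2 = 2*nu+3" by simp
  have "c powr (2*nu+3) = c powr ((2*nu+1) + 2)" by (simp only: e3)
  also have "\<dots> = c powr (2*nu+1) * c powr 2" by (rule powr_add)
  also have "c powr 2 = c\<^sup>2" using cp by simp
  finally have "c powr (2*nu+3) = c powr (2*nu+1) * c\<^sup>2" .
  note cpow = this
  have m: "(x / (2*nu+5) * c) powr (2*nu+1) = (x / (2*nu+5)) powr (2*nu+1) * c powr (2*nu+1)" by (rule powr_mult)
  have gen: "\<And>x d n::real. x \<noteq> 0 \<Longrightarrow> d \<noteq> 0 \<Longrightarrow> x / d * (n / x) = n / d" by (simp add: field_simps)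
  have n2: "2 * (nu + 1) = 2*nu+2" by simp
  have k: "x / (2*nu+5) * c = (2*nu+2)/(2*nu+5)" unfolding c_def n2 using x nu by (intro gen) auto
  have "(x / (2*nu+5)) powr (2*nu+1) * c powr (2*nu+3) = (x / (2*nu+5)) powr (2*nu+1) * (c powr (2*nu+1) * c\<^sup>2)"
    by (simp only: cpow)
  also have "\<dots> = ((x / (2*nu+5)) powr (2*nu+1) * c powr (2*nu+1)) * c\<^sup>2" by (simp only: mult.assoc)
  also have "\<dots> = K * c\<^sup>2" unfolding m[symmetric] k K_def ..
  finally have f2: "ff nu x \<ge> K * c\<^sup>2" using f1 by simp
  have "c\<^sup>2 = (2*nu+2)\<^sup>2 / x\<^sup>2" unfolding c_def by (simp add: power_divide)
  also have "\<dots> \<ge> 4 / x\<^sup>2"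
  proof -
    have "2 * 2 \<le> (2*nu+2) * (2*nu+2)" using nu by (intro mult_mono) auto
    then have "4 \<le> (2*nu+2)\<^sup>2" by (simp add: power2_eq_square)
    then show ?thesis by (intro divide_right_mono) auto
  qed
  finally have "K * c\<^sup>2 \<ge> K * (4 / x\<^sup>2)" using Kp by (intro mult_left_mono) auto
  moreover have "K * (4 / x\<^sup>2) \<ge> 4"
    using xK x Kp unfolding K_def[symmetric] by (simp add: field_simps)
  ultimately show ?thesis using f2 by linarith
qed

lemma ff_gt: assumes nu: "nu \<ge> 0" and x0: "x0 > 0" and ff0: "ff nu x0 = 1"
    and uniq: "\<forall>y>0. ff nu y = 1 \<longrightarrow> y = x0"
    and x: "0 < x" "x < x0"
  shows "ff nu x > 1"
proof -
  define K where "K = ((2*nu+2)/(2*nu+5)) powr (2*nu+1)"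
  have Kp: "K > 0" unfolding K_def using nu by simp
  define p where "p = min 1 (min (x0/2) (sqrt K))"
  have p: "0 < p" "p \<le> 1" "p < x0" "p \<le> sqrt K" unfolding p_def using x0 Kp by auto
  have "p\<^sup>2 \<le> (sqrt K)\<^sup>2" using p by (intro power_mono) auto
  then have "p\<^sup>2 \<le> K" using Kp by simp
  then have fp: "ff nu p > 1" using ff_small[OF nu p(1,2)] unfolding K_def by simp
  show ?thesis
  proof (rule ccontr)
    assume "\<not> ?thesis"
    then have fx: "ff nu x \<le> 1" by simp
    have "\<exists>w. 0 < w \<and> w < x0 \<and> ff nu w = 1"
    proof (cases "p \<le> x")
      case True
      obtain w where "p \<le> w" "w \<le> x" "ff nu w = 1"
        using IVT2'[of "ff nu" x 1 p, OF fx _ True ff_cont[OF nu p(1)]] fp by auto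
      then show ?thesis using p x by (intro exI[of _ w]) auto
    next
      case False
      obtain w where "x \<le> w" "w \<le> p" "ff nu w = 1"
        using IVT'[of "ff nu" x 1 p, OF fx _ _ ff_cont[OF nu x(1)]] fp False by auto
      then show ?thesis using p x by (intro exI[of _ w]) auto
    qed
    then show False using uniq by auto
  qed
qed

theorem mainTheorem8:
  fixes nu x0 :: real
  assumes "nu \<ge> 0"
    and "x0 > 0" and "root_eq nu x0"
    and "\<forall>y>0. root_eq nu y \<longrightarrow> y = x0"
  shows "\<forall>x\<in>{0<..<x0}.
     (besselI (nu + 1) x) powr (4 * nu + 4)
       < (besselI (nu + 2) x) powr (2 * nu + 1) * (besselI nu x) powr (2 * nu + 3)"
proof
  fix x assume "x \<in> {0<..<x0}"
  then have x: "0 < x" "x < x0" by auto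
  have nu: "nu \<ge> 0" using assms(1) .
  have req: "root_eq nu y \<longleftrightarrow> ff nu y = 1" for y unfolding root_eq_def ff_def ..
  have fx: "ff nu x > 1" using ff_gt[OF nu assms(2) _ _ x] assms(3,4) unfolding req by auto
  define h where "h = x/2"
  define y where "y = x\<^sup>2/4"
  define A0 where "A0 = SS nu y"
  define A1 where "A1 = SS (nu+1) y"
  define A2 where "A2 = SS (nu+2) y"
  have hp: "h > 0" unfolding h_def using x by simp
  have yh: "y = h * h" unfolding y_def h_def by (simp add: power2_eq_square)
  have A0p: "A0 > 0" unfolding A0_def y_def using nu by (intro SS_pos) auto
  have A1p: "A1 > 0" unfolding A1_def y_def using nu by (intro SS_pos) auto
  have A2p: "A2 > 0" unfolding A2_def y_def using nu by (intro SS_pos) auto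
  define P where "P = besselI nu x"
  define Q where "Q = besselI (nu+1) x"
  define U where "U = besselI (nu+2) x"
  have P: "P = h powr nu * A0" unfolding P_def A0_def h_def y_def using besselI_SS[OF x(1) nu] .
  have hp1: "h powr (nu+1) = h powr nu * h" using hp by (simp add: powr_add)
  have hp2: "h powr (nu+2) = h powr nu * (h*h)"
  proof -
    have "h powr (nu+2) = h powr nu * h powr 2" by (rule powr_add)
    also have "h powr 2 = h * h" using hp by (simp add: power2_eq_square)
    finally show ?thesis .
  qed
  have Q0: "besselI (nu+1) x = (x/2) powr (nu+1) * SS (nu+1) (x\<^sup>2/4)"
    by (rule besselI_SS[OF x(1)]) (use nu in simp)
  have U0: "besselI (nu+2) x = (x/2) powr (nu+2) * SS (nu+2) (x\<^sup>2/4)"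
    by (rule besselI_SS[OF x(1)]) (use nu in simp)
  have Q: "Q = h powr nu * h * A1" unfolding Q_def Q0 h_def[symmetric] y_def[symmetric] A1_def[symmetric] hp1 ..
  have U: "U = h powr nu * (h * h) * A2" unfolding U_def U0 h_def[symmetric] y_def[symmetric] A2_def[symmetric] hp2 ..
  have hnu: "h powr nu > 0" using hp by simp
  have Pp: "P > 0" "Q > 0" "U > 0" unfolding P Q U using hnu hp A0p A1p A2p by auto
  define c where "c = 2 * (nu + 1) / x"
  define t where "t = U / Q"
  have tR: "t = RR nu x"
  proof -
    have "t = (h powr nu * h * (h * A2)) / (h powr nu * h * A1)" unfolding t_def U Q by (simp only: mult_ac)
    also have "\<dots> = h * A2 / A1" using hnu hp A1p by simp
    also have "\<dots> = RR nu x" unfolding RR_def h_def A1_def A2_def y_def by simp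
    finally show ?thesis .
  qed
  have rec: "A0 = y * A2 + (nu+1) * A1" unfolding A0_def A1_def A2_def by (rule SS_rec[OF nu])
  have ch: "c * h = nu + 1" unfolding c_def h_def using x by simp
  have tQ: "t * Q = U" unfolding t_def using Pp by simp
  have PQ: "P = (c + t) * Q"
  proof -
    have "(c + t) * Q = c * Q + U" using tQ by (simp add: distrib_right)
    also have "c * Q = (c * h) * h powr nu * A1" unfolding Q by (simp only: mult_ac)
    also have "\<dots> = (nu+1) * h powr nu * A1" unfolding ch ..
    finally have "(c + t) * Q = (nu+1) * h powr nu * A1 + h powr nu * (h * h) * A2" unfolding U .
    also have "\<dots> = h powr nu * (y * A2 + (nu+1) * A1)" unfolding yh by (simp only: algebra_simps)
    also have "\<dots> = P" unfolding P rec ..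
    finally show ?thesis by simp
  qed
  have tp: "t > 0" unfolding t_def using Pp by simp
  have cp: "c > 0" unfolding c_def using nu x by simp
  have Gt: "GammaB nu x \<le> t" unfolding tR by (rule amos[OF nu x(1)])
  have Gp: "GammaB nu x > 0" by (rule GB_pos[OF nu x(1)])
  have "ff nu x \<le> t powr (2*nu+1) * (c + t) powr (2*nu+3)"
    unfolding ff_def c_def[symmetric] using Gt Gp nu cp
    by (intro mult_mono powr_mono2) auto
  then have key: "t powr (2*nu+1) * (c + t) powr (2*nu+3) > 1" using fx by simp
  have "U powr (2*nu+1) * P powr (2*nu+3) = (t powr (2*nu+1) * (c + t) powr (2*nu+3)) * (Q powr (2*nu+1) * Q powr (2*nu+3))"
  proof -
    have "U = t * Q" unfolding t_def using Pp by simp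
    then show ?thesis unfolding PQ by (simp add: powr_mult)
  qed
  also have "Q powr (2*nu+1) * Q powr (2*nu+3) = Q powr (4*nu+4)"
    by (simp add: powr_add[symmetric])
  finally have eq: "U powr (2*nu+1) * P powr (2*nu+3) = (t powr (2*nu+1) * (c + t) powr (2*nu+3)) * Q powr (4*nu+4)" .
  have "Q powr (4*nu+4) > 0" using Pp by simp
  then have "Q powr (4*nu+4) < U powr (2*nu+1) * P powr (2*nu+3)"
    unfolding eq using key by simp
  then show "(besselI (nu + 1) x) powr (4 * nu + 4)
       < (besselI (nu + 2) x) powr (2 * nu + 1) * (besselI nu x) powr (2 * nu + 3)"
    unfolding P_def Q_def U_def .
qed

end
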